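(* Let q₁, …, qₙ, q, p be terms in the language of strong quasi-Wajsberg* algebras. Then: (1) if q₁, …, qₙ ⊨_SQW* q, then q₁, …, qₙ ⊨_W* q; (2) q₁, …, qₙ ⊨_W* q iff q₁, …, qₙ ⊨_SQW* (p→p)→q; (3) if q is regular, then q₁, …, qₙ ⊨_W* q iff q₁, …, qₙ ⊨_SQW* q.
   Context: A quasi-Wajsberg* algebra is an algebra ⟨W; →, ¬, ⁺, ⁻, 1⟩ of type ⟨2,1,1,1,0⟩ satisfying: x→y = ¬y→¬x; (x→1)→((y→1)→z) = (y→1)→((x→1)→z); (1→x)→1 = 1; (z→z)→(x→y) = x→y; (1→1)→x⁺ = ((1→1)→x)⁺ = (x→1)→1 and (1→1)→x⁻ = ((1→1)→x)⁻ = (x→¬1)→¬1; x→y = (y⁺→x⁻)→(x⁺→y⁻); ¬(x→y) = y→x; ¬¬x = x; (x→(¬x→y))⁺ = x⁺→(¬x⁺→y⁺); x∨y = y∨x; x∨(y∨z) = (x∨y)∨z; x→(y∨z) = (x→y)∨(x→z); where x∨y = ((x⁺→y⁺)⁺→(¬x)⁻)→((y⁻→x⁻)⁻→x⁻). A strong quasi-Wajsberg* algebra is a quasi-Wajsberg* algebra satisfying x⁺ = (1→1)→x⁺ and x⁻ = (1→1)→x⁻; SQW* denotes the variety of these. A Wajsberg* algebra is an algebra ⟨M; →, ¬, 1⟩ satisfying the analogous axioms with (y→y)→x = x, where x⁺ = (x→1)→1, x⁻ = (x→¬1)→¬1; W* denotes this variety, and W* ⊆ SQW*. A term is regular if it contains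 → or 1 (non-regular terms are ¬ⁿp, p a variable). For a class K ∈ {SQW*, W*} and terms t₁, …, tₙ, t, with c₁, …, cₙ, c constants (added if needed) denoting designated elements: t₁, …, tₙ ⊨_K t iff K ⊨ (t₁ ≈ (c₁→1)→1 & … & tₙ ≈ (cₙ→1)→1 ⇒ t ≈ (c→1)→1). *)

theory Defs
  imports Main
begin

datatype trm = Var nat | Imp trm trm | Neg trm | Pos trm | Mns trm | One

fun regular :: "trm \<Rightarrow> bool" where
  "regular (Var _) = False"
| "regular (Neg t) = regular t"
| "regular _ = True"

record 'a qw =
  carrier :: "'a set"
  imp :: "'a \<Rightarrow> 'a \<Rightarrow> 'a"
  neg :: "'a \<Rightarrow> 'a"
  pos :: "'a \<Rightarrow> 'a"
  mns :: "'a \<Rightarrow> 'a"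
  one :: "'a"

definition qjoin :: "'a qw \<Rightarrow> 'a \<Rightarrow> 'a \<Rightarrow> 'a" where
  "qjoin A x y =
     imp A (imp A (pos A (imp A (pos A x) (pos A y))) (mns A (neg A x)))
           (imp A (mns A (imp A (mns A y) (mns A x))) (mns A x))"

definition qwstar :: "'a qw \<Rightarrow> bool" where
  "qwstar A \<longleftrightarrow>
    one A \<in> carrier A \<and>
    (\<forall>x\<in>carrier A. \<forall>y\<in>carrier A. imp A x y \<in> carrier A) \<and>
    (\<forall>x\<in>carrier A. neg A x \<in> carrier A \<and> pos A x \<in> carrier A \<and> mns A x \<in> carrier A) \<and>
    (\<forall>x\<in>carrier A. \<forall>y\<in>carrier A. \<forall>z\<in>carrier A.
      imp A x y = imp A (neg A y) (neg A x) \<and>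
      imp A (imp A x (one A)) (imp A (imp A y (one A)) z)
        = imp A (imp A y (one A)) (imp A (imp A x (one A)) z) \<and>
      imp A (imp A (one A) x) (one A) = one A \<and>
      imp A (imp A z z) (imp A x y) = imp A x y \<and>
      imp A (imp A (one A) (one A)) (pos A x) = pos A (imp A (imp A (one A) (one A)) x) \<and>
      pos A (imp A (imp A (one A) (one A)) x) = imp A (imp A x (one A)) (one A) \<and>
      imp A (imp A (one A) (one A)) (mns A x) = mns A (imp A (imp A (one A) (one A)) x) \<and>
      mns A (imp A (imp A (one A) (one A)) x) = imp A (imp A x (neg A (one A))) (neg A (one A)) \<and>
      imp A x y = imp A (imp A (pos A y) (mns A x)) (imp A (pos A x) (mns A y)) \<and>
      neg A (imp A x y) = imp A y x \<and>
      neg A (neg A x) = x \<and>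
      pos A (imp A x (imp A (neg A x) y)) = imp A (pos A x) (imp A (neg A (pos A x)) (pos A y)) \<and>
      qjoin A x y = qjoin A y x \<and>
      qjoin A x (qjoin A y z) = qjoin A (qjoin A x y) z \<and>
      imp A x (qjoin A y z) = qjoin A (imp A x y) (imp A x z))"

definition sqwstar :: "'a qw \<Rightarrow> bool" where
  "sqwstar A \<longleftrightarrow> qwstar A \<and>
    (\<forall>x\<in>carrier A. pos A x = imp A (imp A (one A) (one A)) (pos A x) \<and>
                   mns A x = imp A (imp A (one A) (one A)) (mns A x))"

text \<open>In presence of this law the axioms force pos x = (x->1)->1 and mns x = (x->~1)->~1,
  i.e. the unary operations are the defined ones.\<close>
definition wstar :: "'a qw \<Rightarrow> bool" where
  "wstar A \<longleftrightarrow> qwstar A \<and>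
    (\<forall>x\<in>carrier A. \<forall>y\<in>carrier A. imp A (imp A y y) x = x)"

fun eval :: "'a qw \<Rightarrow> (nat \<Rightarrow> 'a) \<Rightarrow> trm \<Rightarrow> 'a" where
  "eval A v (Var n) = v n"
| "eval A v (Imp s t) = imp A (eval A v s) (eval A v t)"
| "eval A v (Neg t) = neg A (eval A v t)"
| "eval A v (Pos t) = pos A (eval A v t)"
| "eval A v (Mns t) = mns A (eval A v t)"
| "eval A v One = one A"

definition designated :: "'a qw \<Rightarrow> 'a \<Rightarrow> bool" where
  "designated A a \<longleftrightarrow> (\<exists>c\<in>carrier A. a = imp A (imp A c (one A)) (one A))"

text \<open>ts |=_K t, relative to the algebras of K on carrier type 'a.\<close>
definition conseq :: "('a qw \<Rightarrow> bool) \<Rightarrow> trm list \<Rightarrow> trm \<Rightarrow> bool" where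
  "conseq K ts t \<longleftrightarrow>
    (\<forall>A v. K A \<and> (\<forall>n. v n \<in> carrier A) \<and> (\<forall>s\<in>set ts. designated A (eval A v s))
       \<longrightarrow> designated A (eval A v t))"

end

theory Submission
  imports Defs
begin

lemma qw_cl:
  assumes "qwstar A"
  shows "one A \<in> carrier A"
    and "x\<in>carrier A \<Longrightarrow> y\<in>carrier A \<Longrightarrow> imp A x y \<in> carrier A"
    and "x\<in>carrier A \<Longrightarrow> neg A x \<in> carrier A"
    and "x\<in>carrier A \<Longrightarrow> pos A x \<in> carrier A"
    and "x\<in>carrier A \<Longrightarrow> mns A x \<in> carrier A"
proof -
  note h = qwstar_def[THEN iffD1, OF assms]
  show "one A \<in> carrier A" using h[THEN conjunct1] .
  show "x\<in>carrier A \<Longrightarrow> y\<in>carrier A \<Longrightarrow> imp A x y \<in> carrier A"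
    using h[THEN conjunct2, THEN conjunct1] by blast
  show "x\<in>carrier A \<Longrightarrow> neg A x \<in> carrier A" "x\<in>carrier A \<Longrightarrow> pos A x \<in> carrier A"
    "x\<in>carrier A \<Longrightarrow> mns A x \<in> carrier A"
    using h[THEN conjunct2, THEN conjunct2, THEN conjunct1] by blast+
qed

lemma qw_ax:
  assumes "qwstar A" "x\<in>carrier A" "y\<in>carrier A" "z\<in>carrier A"
  shows contra: "imp A x y = imp A (neg A y) (neg A x)"
    and oneax: "imp A (imp A (one A) x) (one A) = one A"
    and zz: "imp A (imp A z z) (imp A x y) = imp A x y"
    and pose: "imp A (imp A (one A) (one A)) (pos A x) = pos A (imp A (imp A (one A) (one A)) x)"
    and mnse: "imp A (imp A (one A) (one A)) (mns A x) = mns A (imp A (imp A (one A) (one A)) x)"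
    and pm: "imp A x y = imp A (imp A (pos A y) (mns A x)) (imp A (pos A x) (mns A y))"
    and negimp: "neg A (imp A x y) = imp A y x"
    and negneg: "neg A (neg A x) = x"
proof -
  note h = qwstar_def[THEN iffD1, OF assms(1), THEN conjunct2, THEN conjunct2, THEN conjunct2,
     rule_format, OF assms(2,3,4)]
  show "imp A x y = imp A (neg A y) (neg A x)" using h by (elim conjE)
  show "imp A (imp A (one A) x) (one A) = one A" using h by (elim conjE)
  show "imp A (imp A z z) (imp A x y) = imp A x y" using h by (elim conjE)
  show "imp A (imp A (one A) (one A)) (pos A x) = pos A (imp A (imp A (one A) (one A)) x)" using h by (elim conjE)
  show "imp A (imp A (one A) (one A)) (mns A x) = mns A (imp A (imp A (one A) (one A)) x)" using h by (elim conjE)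
  show "imp A x y = imp A (imp A (pos A y) (mns A x)) (imp A (pos A x) (mns A y))" using h by (elim conjE)
  show "neg A (imp A x y) = imp A y x" using h by (elim conjE)
  show "neg A (neg A x) = x" using h by (elim conjE)
qed

definition ee :: "'a qw \<Rightarrow> 'a \<Rightarrow> 'a" where
  "ee A x = imp A (imp A (one A) (one A)) x"

lemma sq_strong:
  assumes "sqwstar A" "x\<in>carrier A"
  shows "pos A x = imp A (imp A (one A) (one A)) (pos A x)"
    and "mns A x = imp A (imp A (one A) (one A)) (mns A x)"
  using assms unfolding sqwstar_def by auto

lemma sq_qw: "sqwstar A \<Longrightarrow> qwstar A" unfolding sqwstar_def by auto

lemma ee_cl: "qwstar A \<Longrightarrow> x \<in> carrier A \<Longrightarrow> ee A x \<in> carrier A"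
  unfolding ee_def using qw_cl by metis

lemma ee_one: "qwstar A \<Longrightarrow> ee A (one A) = one A"
  unfolding ee_def using qw_cl(1) oneax by metis

lemma ee_imp: "qwstar A \<Longrightarrow> x \<in> carrier A \<Longrightarrow> y \<in> carrier A \<Longrightarrow> ee A (imp A x y) = imp A x y"
  unfolding ee_def using qw_cl(1) zz by metis

lemma ee_pos: "sqwstar A \<Longrightarrow> x \<in> carrier A \<Longrightarrow> pos A (ee A x) = pos A x"
  unfolding ee_def using sq_qw sq_strong pose by metis

lemma ee_mns: "sqwstar A \<Longrightarrow> x \<in> carrier A \<Longrightarrow> mns A (ee A x) = mns A x"
  unfolding ee_def using sq_qw sq_strong mnse by metis

lemma H1:
  assumes "sqwstar A" "x \<in> carrier A" "y \<in> carrier A"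
  shows "imp A (ee A x) (ee A y) = imp A x y"
proof -
  have q: "qwstar A" by (rule sq_qw[OF assms(1)])
  have "imp A (ee A x) (ee A y) = imp A (imp A (pos A (ee A y)) (mns A (ee A x))) (imp A (pos A (ee A x)) (mns A (ee A y)))"
    using pm[OF q ee_cl[OF q assms(2)] ee_cl[OF q assms(3)] assms(2)] .
  also have "\<dots> = imp A (imp A (pos A y) (mns A x)) (imp A (pos A x) (mns A y))"
    using assms ee_pos ee_mns by metis
  also have "\<dots> = imp A x y" using pm[OF q assms(2,3) assms(2)] by simp
  finally show ?thesis .
qed

lemma ee_neg:
  assumes "qwstar A" "x \<in> carrier A"
  shows "ee A (neg A x) = neg A (ee A x)"
proof -
  have o: "one A \<in> carrier A" and oo: "imp A (one A) (one A) \<in> carrier A"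
    using qw_cl assms by metis+
  have "ee A (neg A x) = imp A (neg A (neg A x)) (neg A (imp A (one A) (one A)))"
    unfolding ee_def using contra[OF assms(1) oo qw_cl(3)[OF assms] o] .
  also have "\<dots> = imp A x (imp A (one A) (one A))"
    using negneg[OF assms o o] negimp[OF assms(1) o o o] by simp
  also have "\<dots> = neg A (ee A x)" unfolding ee_def using negimp[OF assms(1) oo assms(2) o] by simp
  finally show ?thesis .
qed

lemma ee_pos2: "qwstar A \<Longrightarrow> x \<in> carrier A \<Longrightarrow> ee A (pos A x) = pos A (ee A x)"
  unfolding ee_def using pose by metis

lemma ee_mns2: "qwstar A \<Longrightarrow> x \<in> carrier A \<Longrightarrow> ee A (mns A x) = mns A (ee A x)"
  unfolding ee_def using mnse by metis

definition RA :: "'a qw \<Rightarrow> 'a qw" where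
  "RA A = A\<lparr>carrier := ee A ` carrier A\<rparr>"

lemma RA_sel [simp]: "imp (RA A) = imp A" "neg (RA A) = neg A" "pos (RA A) = pos A"
  "mns (RA A) = mns A" "one (RA A) = one A" "carrier (RA A) = ee A ` carrier A"
  unfolding RA_def by simp_all

lemma qjoin_RA [simp]: "qjoin (RA A) = qjoin A"
  unfolding qjoin_def by simp

lemma RA_w:
  assumes "sqwstar A"
  shows "wstar (RA A)"
proof -
  have q: "qwstar A" by (rule sq_qw[OF assms])
  have sub: "ee A ` carrier A \<subseteq> carrier A" using ee_cl[OF q] by blast
  have o: "one A \<in> carrier A" using qw_cl(1)[OF q] .
  have oo: "imp A (one A) (one A) \<in> carrier A" using qw_cl(2)[OF q o o] .
  have c1: "one A \<in> ee A ` carrier A"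
  proof (rule image_eqI)
    show "one A = ee A (one A)" using ee_one[OF q] by simp
    show "one A \<in> carrier A" by (rule o)
  qed
  have c2: "imp A x y \<in> ee A ` carrier A" if "x \<in> ee A ` carrier A" "y \<in> ee A ` carrier A" for x y
  proof -
    have xy: "x \<in> carrier A" "y \<in> carrier A" using that sub by blast+
    show ?thesis
    proof (rule image_eqI)
      show "imp A x y = ee A (imp A x y)" using ee_imp[OF q xy] by simp
      show "imp A x y \<in> carrier A" by (rule qw_cl(2)[OF q xy])
    qed
  qed
  have c3: "neg A x \<in> ee A ` carrier A \<and> pos A x \<in> ee A ` carrier A \<and> mns A x \<in> ee A ` carrier A"
    if xin: "x \<in> ee A ` carrier A" for x
  proof -
    obtain a where a: "a \<in> carrier A" "x = ee A a" using xin by blast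
    have 1: "neg A x \<in> ee A ` carrier A" unfolding a(2) by (rule image_eqI[where f="ee A" and x="neg A a", OF ee_neg[OF q a(1), symmetric] qw_cl(3)[OF q a(1)]])
    have 2: "pos A x \<in> ee A ` carrier A" unfolding a(2) by (rule image_eqI[where f="ee A" and x="pos A a", OF ee_pos2[OF q a(1), symmetric] qw_cl(4)[OF q a(1)]])
    have 3: "mns A x \<in> ee A ` carrier A" unfolding a(2) by (rule image_eqI[where f="ee A" and x="mns A a", OF ee_mns2[OF q a(1), symmetric] qw_cl(5)[OF q a(1)]])
    show ?thesis using 1 2 3 by blast
  qed
  have w: "imp A (imp A y y) x = x" if xin: "x \<in> ee A ` carrier A" and yin: "y \<in> ee A ` carrier A" for x y
  proof -
    obtain a where a: "a \<in> carrier A" "x = ee A a" using xin by blast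
    have "y \<in> carrier A" using yin sub by blast
    show ?thesis unfolding a(2) ee_def by (rule zz[OF q oo a(1) \<open>y \<in> carrier A\<close>])
  qed
  have eqs: "\<forall>x\<in>ee A ` carrier A. \<forall>y\<in>ee A ` carrier A. \<forall>z\<in>ee A ` carrier A.
      imp A x y = imp A (neg A y) (neg A x) \<and>
      imp A (imp A x (one A)) (imp A (imp A y (one A)) z)
        = imp A (imp A y (one A)) (imp A (imp A x (one A)) z) \<and>
      imp A (imp A (one A) x) (one A) = one A \<and>
      imp A (imp A z z) (imp A x y) = imp A x y \<and>
      imp A (imp A (one A) (one A)) (pos A x) = pos A (imp A (imp A (one A) (one A)) x) \<and>
      pos A (imp A (imp A (one A) (one A)) x) = imp A (imp A x (one A)) (one A) \<and>
      imp A (imp A (one A) (one A)) (mns A x) = mns A (imp A (imp A (one A) (one A)) x) \<and>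
      mns A (imp A (imp A (one A) (one A)) x) = imp A (imp A x (neg A (one A))) (neg A (one A)) \<and>
      imp A x y = imp A (imp A (pos A y) (mns A x)) (imp A (pos A x) (mns A y)) \<and>
      neg A (imp A x y) = imp A y x \<and>
      neg A (neg A x) = x \<and>
      pos A (imp A x (imp A (neg A x) y)) = imp A (pos A x) (imp A (neg A (pos A x)) (pos A y)) \<and>
      qjoin A x y = qjoin A y x \<and>
      qjoin A x (qjoin A y z) = qjoin A (qjoin A x y) z \<and>
      imp A x (qjoin A y z) = qjoin A (imp A x y) (imp A x z)"
    (is "\<forall>x\<in>_. \<forall>y\<in>_. \<forall>z\<in>_. ?P x y z")
  proof (intro ballI)
    fix x y z assume xyz: "x \<in> ee A ` carrier A" "y \<in> ee A ` carrier A" "z \<in> ee A ` carrier A"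
    then have "x \<in> carrier A" "y \<in> carrier A" "z \<in> carrier A" using sub by blast+
    then show "?P x y z"
      by (rule qwstar_def[THEN iffD1, OF q, THEN conjunct2, THEN conjunct2, THEN conjunct2, rule_format])
  qed
  show ?thesis unfolding wstar_def qwstar_def RA_sel qjoin_RA
    apply (intro conjI)
        apply (rule c1)
       apply (blast intro: c2)
      using c3 apply blast
     apply (rule eqs)
    apply (blast intro: w)
    done
qed

lemma eval_cl: "qwstar A \<Longrightarrow> (\<forall>n. v n \<in> carrier A) \<Longrightarrow> eval A v t \<in> carrier A"
  by (induction t) (auto intro: qw_cl)

lemma eval_RA: "eval (RA A) w t = eval A w t"
  by (induction t) auto

lemma eval_ee:
  assumes "sqwstar A" "\<forall>n. v n \<in> carrier A"
  shows "eval A (ee A \<circ> v) t = ee A (eval A v t)"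
proof (induction t)
  case (Imp s t)
  have q: "qwstar A" by (rule sq_qw[OF assms(1)])
  show ?case using Imp H1[OF assms(1) eval_cl[OF q assms(2)] eval_cl[OF q assms(2)]]
      ee_imp[OF q eval_cl[OF q assms(2)] eval_cl[OF q assms(2)]] by simp
next
  case (Neg t) then show ?case using ee_neg[OF sq_qw[OF assms(1)] eval_cl[OF sq_qw[OF assms(1)] assms(2)]] by simp
next
  case (Pos t) then show ?case using ee_pos2[OF sq_qw[OF assms(1)] eval_cl[OF sq_qw[OF assms(1)] assms(2)]] by simp
next
  case (Mns t) then show ?case using ee_mns2[OF sq_qw[OF assms(1)] eval_cl[OF sq_qw[OF assms(1)] assms(2)]] by simp
next
  case One then show ?case using ee_one[OF sq_qw[OF assms(1)]] by simp
qed simp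

lemma eval_reg:
  assumes "sqwstar A" "\<forall>n. v n \<in> carrier A" "regular t"
  shows "ee A (eval A v t) = eval A v t"
  using assms(3)
proof (induction t)
  case (Imp s t)
  have q: "qwstar A" by (rule sq_qw[OF assms(1)])
  show ?case using ee_imp[OF q eval_cl[OF q assms(2)] eval_cl[OF q assms(2)]] by simp
next
  case (Neg t) then show ?case using ee_neg[OF sq_qw[OF assms(1)] eval_cl[OF sq_qw[OF assms(1)] assms(2)]] by simp
next
  case (Pos t) then show ?case using sq_strong(1)[OF assms(1) eval_cl[OF sq_qw[OF assms(1)] assms(2)]]
    unfolding ee_def by simp
next
  case (Mns t) then show ?case using sq_strong(2)[OF assms(1) eval_cl[OF sq_qw[OF assms(1)] assms(2)]]
    unfolding ee_def by simp
next
  case One then show ?case using ee_one[OF sq_qw[OF assms(1)]] by simp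
qed simp

lemma des_RA:
  assumes "sqwstar A" "designated A x"
  shows "designated (RA A) x" "ee A x = x"
proof -
  have q: "qwstar A" by (rule sq_qw[OF assms(1)])
  obtain c where c: "c \<in> carrier A" "x = imp A (imp A c (one A)) (one A)"
    using assms(2) unfolding designated_def by blast
  have "imp A (ee A c) (one A) = imp A c (one A)"
    using H1[OF assms(1) c(1) qw_cl(1)[OF q]] ee_one[OF q] by simp
  then show "designated (RA A) x" unfolding designated_def RA_sel
  proof -
    assume eq: "imp A (ee A c) (one A) = imp A c (one A)"
    show "\<exists>c'\<in>ee A ` carrier A. x = imp A (imp A c' (one A)) (one A)"
    proof (rule bexI[of _ "ee A c"])
      show "x = imp A (imp A (ee A c) (one A)) (one A)" using c(2) eq by simp
      show "ee A c \<in> ee A ` carrier A" using c(1) by (rule imageI)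
    qed
  qed
  show "ee A x = x" using c ee_imp[OF q] qw_cl[OF q] by metis
qed

lemma des_RA2: "sqwstar A \<Longrightarrow> designated (RA A) x \<Longrightarrow> designated A x"
  unfolding designated_def using ee_cl sq_qw by fastforce

lemma w_sq:
  assumes "wstar A" shows "sqwstar A"
proof -
  have q: "qwstar A" using assms unfolding wstar_def by simp
  have w: "\<forall>x\<in>carrier A. \<forall>y\<in>carrier A. imp A (imp A y y) x = x" using assms unfolding wstar_def by simp
  have o: "one A \<in> carrier A" by (rule qw_cl(1)[OF q])
  show ?thesis unfolding sqwstar_def
  proof (intro conjI ballI q)
    fix x assume x: "x \<in> carrier A"
    show "pos A x = imp A (imp A (one A) (one A)) (pos A x)"
      using w qw_cl(4)[OF q x] o by simp
    show "mns A x = imp A (imp A (one A) (one A)) (mns A x)"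
      using w qw_cl(5)[OF q x] o by simp
  qed
qed

lemma key:
  assumes "conseq (wstar :: 'a qw \<Rightarrow> bool) qs q" "sqwstar (A :: 'a qw)"
    "\<forall>n. v n \<in> carrier A" "\<forall>s\<in>set qs. designated A (eval A v s)"
  shows "designated A (ee A (eval A v q))"
proof -
  have vv: "\<forall>n. (ee A \<circ> v) n \<in> carrier (RA A)" using assms(3) by simp
  have "\<forall>s\<in>set qs. designated (RA A) (eval (RA A) (ee A \<circ> v) s)"
  proof
    fix s assume "s \<in> set qs"
    then have d: "designated A (eval A v s)" using assms(4) by blast
    have "eval (RA A) (ee A \<circ> v) s = eval A v s"
      unfolding eval_RA eval_ee[OF assms(2,3)] using des_RA(2)[OF assms(2) d] .
    then show "designated (RA A) (eval (RA A) (ee A \<circ> v) s)" using des_RA(1)[OF assms(2) d] by simp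
  qed
  then have "designated (RA A) (eval (RA A) (ee A \<circ> v) q)"
    using assms(1) RA_w[OF assms(2)] vv unfolding conseq_def by blast
  then show ?thesis using des_RA2[OF assms(2)] eval_ee[OF assms(2,3)] eval_RA by metis
qed

theorem lemma3p5:
  fixes qs :: "trm list" and q p :: trm
  shows "(conseq (sqwstar :: 'a qw \<Rightarrow> bool) qs q \<longrightarrow> conseq (wstar :: 'a qw \<Rightarrow> bool) qs q)
    \<and> (conseq (wstar :: 'a qw \<Rightarrow> bool) qs q
         \<longleftrightarrow> conseq (sqwstar :: 'a qw \<Rightarrow> bool) qs (Imp (Imp p p) q))
    \<and> (regular q \<longrightarrow>
         (conseq (wstar :: 'a qw \<Rightarrow> bool) qs q \<longleftrightarrow> conseq (sqwstar :: 'a qw \<Rightarrow> bool) qs q))"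
proof -
  have P1: "conseq (wstar :: 'a qw \<Rightarrow> bool) qs t" if h: "conseq (sqwstar :: 'a qw \<Rightarrow> bool) qs t" for t
    unfolding conseq_def
  proof (intro allI impI)
    fix A :: "'a qw" and v
    assume a: "wstar A \<and> (\<forall>n. v n \<in> carrier A) \<and> (\<forall>s\<in>set qs. designated A (eval A v s))"
    have "sqwstar A" using a by (intro w_sq) simp
    then show "designated A (eval A v t)" using h a unfolding conseq_def by simp
  qed
  have P2a: "conseq (sqwstar :: 'a qw \<Rightarrow> bool) qs (Imp (Imp p p) q)"
    if h: "conseq (wstar :: 'a qw \<Rightarrow> bool) qs q"
    unfolding conseq_def
  proof (intro allI impI)
    fix A :: "'a qw" and v
    assume a: "sqwstar A \<and> (\<forall>n. v n \<in> carrier A) \<and> (\<forall>s\<in>set qs. designated A (eval A v s))"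
    have sA: "sqwstar A" and vA: "\<forall>n. v n \<in> carrier A" and dA: "\<forall>s\<in>set qs. designated A (eval A v s)"
      using a by simp_all
    have qA: "qwstar A" by (rule sq_qw[OF sA])
    define P where "P = eval A v p"
    define Q where "Q = eval A v q"
    have PQ: "P \<in> carrier A" "Q \<in> carrier A" unfolding P_def Q_def using eval_cl[OF qA vA] by simp_all
    have W: "wstar (RA A)" by (rule RA_w[OF sA])
    have eP: "ee A P \<in> carrier (RA A)" "ee A Q \<in> carrier (RA A)" using PQ by simp_all
    have "\<forall>x\<in>carrier (RA A). \<forall>y\<in>carrier (RA A). imp A (imp A y y) x = x"
      using W unfolding wstar_def by simp
    then have 1: "imp A (imp A (ee A P) (ee A P)) (ee A Q) = ee A Q"
      using eP by blast
    have 2: "imp A (ee A P) (ee A P) = imp A P P" by (rule H1[OF sA PQ(1) PQ(1)])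
    have 3: "imp A (imp A P P) Q = imp A (ee A (imp A P P)) (ee A Q)"
      by (rule H1[OF sA qw_cl(2)[OF qA PQ(1) PQ(1)] PQ(2), symmetric])
    have 4: "ee A (imp A P P) = imp A P P" by (rule ee_imp[OF qA PQ(1) PQ(1)])
    have "eval A v (Imp (Imp p p) q) = ee A Q" unfolding P_def[symmetric] Q_def[symmetric] eval.simps
      using 1 2 3 4 by simp
    moreover have "designated A (ee A Q)" unfolding Q_def by (rule key[OF h sA vA dA])
    ultimately show "designated A (eval A v (Imp (Imp p p) q))" by simp
  qed
  have P2b: "conseq (wstar :: 'a qw \<Rightarrow> bool) qs q"
    if h: "conseq (sqwstar :: 'a qw \<Rightarrow> bool) qs (Imp (Imp p p) q)"
    unfolding conseq_def
  proof (intro allI impI)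
    fix A :: "'a qw" and v
    assume a: "wstar A \<and> (\<forall>n. v n \<in> carrier A) \<and> (\<forall>s\<in>set qs. designated A (eval A v s))"
    have wA: "wstar A" and vA: "\<forall>n. v n \<in> carrier A" using a by simp_all
    have qA: "qwstar A" using wA unfolding wstar_def by simp
    have "sqwstar A" by (rule w_sq[OF wA])
    then have "designated A (eval A v (Imp (Imp p p) q))" using h a unfolding conseq_def by simp
    moreover have "eval A v (Imp (Imp p p) q) = eval A v q"
    proof -
      have "\<forall>x\<in>carrier A. \<forall>y\<in>carrier A. imp A (imp A y y) x = x" using wA unfolding wstar_def by simp
      then show ?thesis using eval_cl[OF qA vA] by simp
    qed
    ultimately show "designated A (eval A v q)" by simp
  qed
  have P3: "conseq (sqwstar :: 'a qw \<Rightarrow> bool) qs q"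
    if h: "conseq (wstar :: 'a qw \<Rightarrow> bool) qs q" and r: "regular q"
    unfolding conseq_def
  proof (intro allI impI)
    fix A :: "'a qw" and v
    assume a: "sqwstar A \<and> (\<forall>n. v n \<in> carrier A) \<and> (\<forall>s\<in>set qs. designated A (eval A v s))"
    have sA: "sqwstar A" and vA: "\<forall>n. v n \<in> carrier A" and dA: "\<forall>s\<in>set qs. designated A (eval A v s)"
      using a by simp_all
    have "designated A (ee A (eval A v q))" by (rule key[OF h sA vA dA])
    then show "designated A (eval A v q)" using eval_reg[OF sA vA r] by simp
  qed
  show ?thesis using P1[of q] P2a P2b P3 by blast
qed

end
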